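(* Let $M\in\{0,1\}^{m\times n}$, $N=m+n$, $p=|M|/(mn)$, and let $A$ be the symmetrization of $M$ with eigenvalues $\lambda_1\geq\dots\geq\lambda_N$ and an orthonormal basis of corresponding eigenvectors $v_1,\dots,v_N$ chosen so that $v_i(j)=f(j)\,v_{N+1-i}(j)$ for all $i,j\in[N]$, where $f(j)=1$ for $j\in[m]$ and $f(j)=-1$ for $j\in[m+1,N]$. Let $a_1,\dots,a_N\geq 0$ and $X=\sum_{i=1}^N a_i v_iv_i^T$. Then $$\operatorname{disc}(X)\geq \sum_{i=1}^N a_i\lambda_i-\frac{pN}{2}\max_i(a_i+a_{N+1-i}).$$
   Context: $|M|$ is the number of $1$ entries of $M$. The symmetrization of $M$ is the symmetric matrix $A\in\mathbb{R}^{N\times N}$ with $A_{i,j+m}=A_{j+m,i}=M_{i,j}$ for $(i,j)\in[m]\times[n]$ and all other entries $0$ (the adjacency matrix of the bipartite graph of $M$); its spectrum is symmetric, $\lambda_i=-\lambda_{N+1-i}$, and eigenvectors can be chosen with the stated sign relation. $L\in\mathbb{R}^{N\times N}$ is the adjacency matrix of the complete bipartite graph with parts $[m]$ and $[m+1,N]$. For $X\in\mathbb{R}^{N\times N}$, $\operatorname{disc}(X)=\langle X,A\rangle-p\langle X,L\rangle$ with $\langle\cdot,\cdot\rangle$ the entrywise inner product. *)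

theory Defs
  imports Complex_Main
begin

text \<open>Conventions: indices are 0-based. The matrix M is m x n with rows in {0..<m} and
columns in {0..<n}; an N x N matrix (N = m+n) is a function nat => nat => real restricted
to {0..<N} x {0..<N}. Vertex set [m] becomes {0..<m}, [m+1,N] becomes {m..<m+n}.
Vectors v_1..v_N are v 0 .. v (N-1), with v i j the j-th coordinate; N+1-i becomes N-1-i.\<close>

definition zero_one_matrix :: "nat \<Rightarrow> nat \<Rightarrow> (nat \<Rightarrow> nat \<Rightarrow> real) \<Rightarrow> bool" where
  "zero_one_matrix m n M \<longleftrightarrow> (\<forall>i<m. \<forall>j<n. M i j = 0 \<or> M i j = 1)"

definition ones_count :: "nat \<Rightarrow> nat \<Rightarrow> (nat \<Rightarrow> nat \<Rightarrow> real) \<Rightarrow> nat" where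
  "ones_count m n M = card {(i, j). i < m \<and> j < n \<and> M i j = 1}"

definition density :: "nat \<Rightarrow> nat \<Rightarrow> (nat \<Rightarrow> nat \<Rightarrow> real) \<Rightarrow> real" where
  "density m n M = real (ones_count m n M) / (real m * real n)"

definition symmetrization :: "nat \<Rightarrow> nat \<Rightarrow> (nat \<Rightarrow> nat \<Rightarrow> real) \<Rightarrow> nat \<Rightarrow> nat \<Rightarrow> real" where
  "symmetrization m n M i k =
     (if i < m \<and> m \<le> k \<and> k < m + n then M i (k - m)
      else if k < m \<and> m \<le> i \<and> i < m + n then M k (i - m)
      else 0)"

definition complete_bip :: "nat \<Rightarrow> nat \<Rightarrow> nat \<Rightarrow> nat \<Rightarrow> real" where
  "complete_bip m n i k =
     (if (i < m \<and> m \<le> k \<and> k < m + n) \<or> (k < m \<and> m \<le> i \<and> i < m + n) then 1 else 0)"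

definition mat_inner :: "nat \<Rightarrow> (nat \<Rightarrow> nat \<Rightarrow> real) \<Rightarrow> (nat \<Rightarrow> nat \<Rightarrow> real) \<Rightarrow> real" where
  "mat_inner N X Y = (\<Sum>i<N. \<Sum>k<N. X i k * Y i k)"

definition disc :: "nat \<Rightarrow> nat \<Rightarrow> (nat \<Rightarrow> nat \<Rightarrow> real) \<Rightarrow> (nat \<Rightarrow> nat \<Rightarrow> real) \<Rightarrow> real" where
  "disc m n M X = mat_inner (m + n) X (symmetrization m n M)
                  - density m n M * mat_inner (m + n) X (complete_bip m n)"

definition sgnf :: "nat \<Rightarrow> nat \<Rightarrow> real" where
  "sgnf m j = (if j < m then 1 else -1)"

end

theory Submission
  imports Defs
begin

lemma bessel:
  fixes v :: "nat \<Rightarrow> nat \<Rightarrow> real" and w :: "nat \<Rightarrow> real"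
  assumes orth: "\<And>i k. i < N \<Longrightarrow> k < N \<Longrightarrow>
          (\<Sum>j<N. v i j * v k j) = (if i = k then 1 else 0)"
  shows "(\<Sum>i<N. (\<Sum>j<N. v i j * w j)^2) \<le> (\<Sum>j<N. (w j)^2)"
proof -
  define c where "c i = (\<Sum>j<N. v i j * w j)" for i
  have "0 \<le> (\<Sum>j<N. (w j - (\<Sum>i<N. c i * v i j))^2)"
    by (simp add: sum_nonneg)
  also have "\<dots> = (\<Sum>j<N. (w j)^2) - 2 * (\<Sum>j<N. \<Sum>i<N. c i * v i j * w j)
       + (\<Sum>j<N. (\<Sum>i<N. c i * v i j) * (\<Sum>k<N. c k * v k j))"
    by (simp add: power2_eq_square algebra_simps sum_subtractf sum.distrib sum_distrib_left sum_distrib_right)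
  also have "(\<Sum>j<N. \<Sum>i<N. c i * v i j * w j) = (\<Sum>i<N. c i * c i)"
    by (subst sum.swap) (simp add: c_def sum_distrib_left mult.assoc)
  also have "(\<Sum>j<N. (\<Sum>i<N. c i * v i j) * (\<Sum>k<N. c k * v k j))
      = (\<Sum>j<N. \<Sum>i<N. \<Sum>k<N. c i * c k * (v i j * v k j))"
    by (simp add: sum_product mult_ac)
  also have "\<dots> = (\<Sum>i<N. \<Sum>j<N. \<Sum>k<N. c i * c k * (v i j * v k j))"
    by (rule sum.swap)
  also have "\<dots> = (\<Sum>i<N. \<Sum>k<N. \<Sum>j<N. c i * c k * (v i j * v k j))"
    by (rule sum.cong, simp, rule sum.swap)
  also have "\<dots> = (\<Sum>i<N. \<Sum>k<N. c i * c k * (\<Sum>j<N. v i j * v k j))"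
    by (simp add: sum_distrib_left)
  also have "\<dots> = (\<Sum>i<N. c i * c i)"
  proof (rule sum.cong)
    fix i assume i: "i \<in> {..<N}"
    have "(\<Sum>k<N. c i * c k * (\<Sum>j<N. v i j * v k j)) = (\<Sum>k<N. if i = k then c i * c k else 0)"
      by (rule sum.cong) (use i orth in auto)
    also have "\<dots> = c i * c i" using i by (simp add: sum.delta)
    finally show "(\<Sum>k<N. c i * c k * (\<Sum>j<N. v i j * v k j)) = c i * c i" .
  qed simp
  finally show ?thesis by (simp add: c_def power2_eq_square)
qed


lemma split_sum: "(\<Sum>j<m+n. f j) = (\<Sum>j<m. f j) + (\<Sum>j=m..<m+n. f j)" for f :: "nat \<Rightarrow> real"
  by (simp add: lessThan_atLeast0 sum.atLeastLessThan_concat)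

lemma bip_mult:
  assumes "j < m + n"
  shows "(\<Sum>k<m+n. complete_bip m n j k * w k) = (if j < m then (\<Sum>k=m..<m+n. w k) else (\<Sum>k<m. w k))"
proof (cases "j < m")
  case True
  have "(\<Sum>k<m. complete_bip m n j k * w k) = 0"
    by (rule sum.neutral) (use True in \<open>auto simp: complete_bip_def\<close>)
  moreover have "(\<Sum>k=m..<m+n. complete_bip m n j k * w k) = (\<Sum>k=m..<m+n. w k)"
    by (rule sum.cong) (use True in \<open>auto simp: complete_bip_def\<close>)
  ultimately show ?thesis using True by (simp add: split_sum)
next
  case False
  have "(\<Sum>k<m. complete_bip m n j k * w k) = (\<Sum>k<m. w k)"
    by (rule sum.cong) (use False assms in \<open>auto simp: complete_bip_def\<close>)
  moreover have "(\<Sum>k=m..<m+n. complete_bip m n j k * w k) = 0"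
    by (rule sum.neutral) (use False in \<open>auto simp: complete_bip_def\<close>)
  ultimately show ?thesis using False by (simp add: split_sum)
qed

lemma inner_expand:
  "mat_inner N (\<lambda>j k. \<Sum>i<N. a i * v i j * v i k) B
     = (\<Sum>i<N. a i * (\<Sum>j<N. v i j * (\<Sum>k<N. B j k * v i k)))"
proof -
  have "mat_inner N (\<lambda>j k. \<Sum>i<N. a i * v i j * v i k) B
      = (\<Sum>j<N. \<Sum>k<N. \<Sum>i<N. a i * v i j * (B j k * v i k))"
    unfolding mat_inner_def by (simp add: sum_distrib_right sum_distrib_left mult_ac)
  also have "\<dots> = (\<Sum>j<N. \<Sum>i<N. \<Sum>k<N. a i * v i j * (B j k * v i k))"
    by (rule sum.cong, simp, rule sum.swap)
  also have "\<dots> = (\<Sum>i<N. \<Sum>j<N. \<Sum>k<N. a i * v i j * (B j k * v i k))"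
    by (rule sum.swap)
  also have "\<dots> = (\<Sum>i<N. a i * (\<Sum>j<N. v i j * (\<Sum>k<N. B j k * v i k)))"
    by (simp add: sum_distrib_left mult_ac)
  finally show ?thesis .
qed

lemma term_bound:
  fixes x y K s t :: real
  assumes "0 \<le> x" "0 \<le> y" "x + y \<le> K"
  shows "(x - y) * (s * t) \<le> K * (s^2 + t^2) / 2"
proof -
  have "(x - y) * (s * t) \<le> \<bar>x - y\<bar> * \<bar>s * t\<bar>"
    by (metis abs_ge_self abs_mult)
  also have "\<dots> \<le> K * \<bar>s * t\<bar>"
    by (rule mult_right_mono) (use assms in auto)
  also have "\<dots> \<le> K * ((s^2 + t^2) / 2)"
  proof (rule mult_left_mono)
    have "0 \<le> (\<bar>s\<bar> - \<bar>t\<bar>)^2" by simp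
    then show "\<bar>s * t\<bar> \<le> (s^2 + t^2) / 2"
      by (simp add: power2_eq_square algebra_simps abs_mult)
  qed (use assms in auto)
  finally show ?thesis by simp
qed

theorem lemma3p1:
  fixes m n N :: nat
    and M :: "nat \<Rightarrow> nat \<Rightarrow> real"
    and lam :: "nat \<Rightarrow> real"
    and v :: "nat \<Rightarrow> nat \<Rightarrow> real"
    and a :: "nat \<Rightarrow> real"
    and X :: "nat \<Rightarrow> nat \<Rightarrow> real"
  assumes M01: "zero_one_matrix m n M"
    and N_def: "N = m + n"
    and sorted: "\<And>i k. i \<le> k \<Longrightarrow> k < N \<Longrightarrow> lam k \<le> lam i"
    and orthonormal: "\<And>i k. i < N \<Longrightarrow> k < N \<Longrightarrow>
          (\<Sum>j<N. v i j * v k j) = (if i = k then 1 else 0)"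
    and eigen: "\<And>i j. i < N \<Longrightarrow> j < N \<Longrightarrow>
          (\<Sum>k<N. symmetrization m n M j k * v i k) = lam i * v i j"
    and signrel: "\<And>i j. i < N \<Longrightarrow> j < N \<Longrightarrow> v i j = sgnf m j * v (N - 1 - i) j"
    and a_nonneg: "\<And>i. i < N \<Longrightarrow> a i \<ge> 0"
    and X_def: "X = (\<lambda>j k. \<Sum>i<N. a i * v i j * v i k)"
  shows "disc m n M X \<ge> (\<Sum>i<N. a i * lam i)
           - density m n M * real N / 2 * Max {a i + a (N - 1 - i) | i. i < N}"
  proof -
  define A where "A = symmetrization m n M"
  define L where "L = complete_bip m n"
  define p where "p = density m n M"
  define s where "s i = (\<Sum>j<m. v i j)" for i
  define t where "t i = (\<Sum>j=m..<m+n. v i j)" for i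
  define K where "K = Max {a i + a (N - 1 - i) | i. i < N}"
  have p_nonneg: "0 \<le> p" unfolding p_def density_def by simp
  have h1: "mat_inner N X A = (\<Sum>i<N. a i * lam i)"
  proof -
    have "mat_inner N X A = (\<Sum>i<N. a i * (\<Sum>j<N. v i j * (\<Sum>k<N. A j k * v i k)))"
      unfolding X_def by (rule inner_expand)
    also have "\<dots> = (\<Sum>i<N. a i * lam i)"
    proof (rule sum.cong)
      fix i assume i: "i \<in> {..<N}"
      have "(\<Sum>j<N. v i j * (\<Sum>k<N. A j k * v i k)) = (\<Sum>j<N. lam i * (v i j * v i j))"
        by (rule sum.cong) (use i eigen in \<open>auto simp: A_def\<close>)
      also have "\<dots> = lam i" using orthonormal[of i i] i by (simp add: sum_distrib_left[symmetric])
      finally show "a i * (\<Sum>j<N. v i j * (\<Sum>k<N. A j k * v i k)) = a i * lam i" by simp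
    qed simp
    finally show ?thesis .
  qed
  have h2: "mat_inner N X L = (\<Sum>i<N. a i * (2 * (s i * t i)))"
  proof -
    have "mat_inner N X L = (\<Sum>i<N. a i * (\<Sum>j<N. v i j * (\<Sum>k<N. L j k * v i k)))"
      unfolding X_def by (rule inner_expand)
    also have "\<dots> = (\<Sum>i<N. a i * (2 * (s i * t i)))"
    proof (rule sum.cong)
      fix i assume i: "i \<in> {..<N}"
      have "(\<Sum>j<N. v i j * (\<Sum>k<N. L j k * v i k)) = (\<Sum>j<N. v i j * (if j < m then t i else s i))"
        by (rule sum.cong) (auto simp: L_def N_def bip_mult s_def t_def)
      also have "\<dots> = (\<Sum>j<m. v i j * t i) + (\<Sum>j=m..<m+n. v i j * s i)"
        unfolding N_def split_sum by simp
      also have "\<dots> = 2 * (s i * t i)"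
        by (simp add: s_def t_def sum_distrib_right[symmetric] mult.commute)
      finally show "a i * (\<Sum>j<N. v i j * (\<Sum>k<N. L j k * v i k)) = a i * (2 * (s i * t i))" by simp
    qed simp
    finally show ?thesis .
  qed
  have refl_v: "v (N - 1 - i) j = sgnf m j * v i j" if "i < N" "j < N" for i j
    using signrel[of "N - 1 - i" j] that by simp
  have s_refl: "s (N - 1 - i) = s i" if "i < N" for i
  proof -
    have "v (N - 1 - i) j = v i j" if "j < m" for j
      using refl_v[of i j] \<open>i < N\<close> that N_def by (simp add: sgnf_def)
    then show ?thesis unfolding s_def by simp
  qed
  have t_refl: "t (N - 1 - i) = - t i" if "i < N" for i
  proof -
    have "t (N - 1 - i) = (\<Sum>j=m..<m+n. - v i j)"
    proof -
      have "v (N - 1 - i) j = - v i j" if "m \<le> j" "j < m + n" for j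
        using refl_v[of i j] \<open>i < N\<close> that N_def by (simp add: sgnf_def)
      then show ?thesis unfolding t_def by (intro sum.cong) auto
    qed
    then show ?thesis by (simp add: t_def sum_negf)
  qed
  have reidx: "(\<Sum>i<N. a i * (s i * t i)) = (\<Sum>i<N. a (N - 1 - i) * (s (N - 1 - i) * t (N - 1 - i)))"
    by (rule sum.reindex_bij_witness[where i="\<lambda>i. N - 1 - i" and j="\<lambda>i. N - 1 - i"]) auto
  also have "\<dots> = (\<Sum>i<N. - (a (N - 1 - i) * (s i * t i)))"
    by (rule sum.cong) (use s_refl t_refl in auto)
  finally have pair: "(\<Sum>i<N. a i * (s i * t i)) = - (\<Sum>i<N. a (N - 1 - i) * (s i * t i))"
    by (simp add: sum_negf)
  have h3: "(\<Sum>i<N. a i * (2 * (s i * t i))) = (\<Sum>i<N. (a i - a (N - 1 - i)) * (s i * t i))"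
  proof -
    have "(\<Sum>i<N. a i * (2 * (s i * t i))) = 2 * (\<Sum>i<N. a i * (s i * t i))"
      by (simp add: sum_distrib_left mult_ac)
    moreover have "(\<Sum>i<N. (a i - a (N - 1 - i)) * (s i * t i))
        = (\<Sum>i<N. a i * (s i * t i)) - (\<Sum>i<N. a (N - 1 - i) * (s i * t i))"
      by (simp add: sum_subtractf left_diff_distrib)
    ultimately show ?thesis using pair by simp
  qed
  have bs: "(\<Sum>i<N. (s i)^2) \<le> real m"
  proof -
    have "(\<Sum>i<N. (\<Sum>j<N. v i j * (if j < m then 1 else 0))^2) \<le> (\<Sum>j<N. (if j < m then (1::real) else 0)^2)"
      by (rule bessel[OF orthonormal])
    moreover have "(\<Sum>j<N. v i j * (if j < m then 1 else 0)) = s i" for i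
      unfolding N_def split_sum s_def by simp
    moreover have "(\<Sum>j<N. (if j < m then (1::real) else 0)^2) = real m"
      unfolding N_def split_sum by simp
    ultimately show ?thesis by simp
  qed
  have bt: "(\<Sum>i<N. (t i)^2) \<le> real n"
  proof -
    have "(\<Sum>i<N. (\<Sum>j<N. v i j * (if j < m then 0 else 1))^2) \<le> (\<Sum>j<N. (if j < m then (0::real) else 1)^2)"
      by (rule bessel[OF orthonormal])
    moreover have "(\<Sum>j<N. v i j * (if j < m then 0 else 1)) = t i" for i
      unfolding N_def split_sum t_def by simp
    moreover have "(\<Sum>j<N. (if j < m then (0::real) else 1)^2) = real n"
      unfolding N_def split_sum by simp
    ultimately show ?thesis by simp
  qed
  show ?thesis
  proof (cases "N = 0")
    case True
    then have "m = 0" "n = 0" using N_def by auto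
    then show ?thesis using True by (simp add: disc_def mat_inner_def)
  next
    case False
    have fin: "finite {a i + a (N - 1 - i) | i. i < N}" by simp
    have Kge: "a i + a (N - 1 - i) \<le> K" if "i < N" for i
      unfolding K_def by (rule Max_ge[OF fin]) (use that in blast)
    have K0: "0 \<le> K" using Kge[of 0] False a_nonneg[of 0] a_nonneg[of "N - 1"] by simp
    have "(\<Sum>i<N. (a i - a (N - 1 - i)) * (s i * t i)) \<le> (\<Sum>i<N. K * ((s i)^2 + (t i)^2) / 2)"
    proof (rule sum_mono)
      fix i assume i: "i \<in> {..<N}"
      show "(a i - a (N - 1 - i)) * (s i * t i) \<le> K * ((s i)^2 + (t i)^2) / 2"
        by (rule term_bound) (use i a_nonneg Kge in auto)
    qed
    also have "\<dots> = K / 2 * ((\<Sum>i<N. (s i)^2) + (\<Sum>i<N. (t i)^2))"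
      by (simp add: sum_distrib_left sum.distrib[symmetric] add_divide_distrib distrib_left)
    also have "\<dots> \<le> K / 2 * real N"
      by (rule mult_left_mono) (use bs bt K0 N_def in auto)
    finally have "mat_inner N X L \<le> K / 2 * real N" using h2 h3 by simp
    then have "p * mat_inner N X L \<le> p * (K / 2 * real N)"
      by (rule mult_left_mono) (rule p_nonneg)
    then show ?thesis
      unfolding disc_def using h1 by (simp add: A_def L_def p_def K_def N_def[symmetric] mult_ac)
  qed
qed

end
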